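(* Let $\alpha>0$, $b\ge1$, $c\in\mathbb R$, and let $G_Y(a,\cdot)$ be the exponential distribution with rate $\lambda(a;\alpha)=\alpha(b+\sin(ca))$, i.e. $G_Y(a,l)=1-e^{-\lambda(a;\alpha)l}$ for $l\ge0$. Let $A_1,\dots,A_J$ ($J\in\mathbb N$) be Borel sets partitioning $[0,\infty)$, let $\delta_1,\dots,\delta_J>0$, and set $m(t)=\sum_{j=1}^J\delta_j\mathbf 1_{A_j}(t)$. If $\delta_j\le\alpha(b-1)$ for all $j=1,\dots,J$, then $m$ is the renewal density of an alternating non-homogeneous semi-Markov process on $\{0,1\}\times[0,\infty)$ with $S_0=1$, $X_0=0$, whose state-$1$ sojourn started at jump time $a$ has distribution function $G_Y(a,\cdot)$; that is, its renewal function $M(t)=\sum_{n\ge1}\mathbb P(X_{2n}\le t)$ equals $\int_0^t m(s)\,ds$.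
   Context: An alternating non-homogeneous semi-Markov process is a sequence $(S_n,X_n)_{n\ge0}$ of states in $\{0,1\}$ (with $S_n=1$ for even $n$, $S_n=0$ for odd $n$) and jump times $0=X_0\le X_1\le\cdots$, such that for each $n$ the conditional distribution of $X_{n+1}-X_n$ given the past depends only on $(S_n,X_n)$ and not on $n$; the distribution of state-$0$ sojourns is not required to be absolutely continuous. Periods in state 1 are $Y$-phases; a cycle is a $Y$-phase followed by a $Z$-phase (state $0$), and the renewal function counts the expected number of completed cycles. *)

theory Defs
  imports "HOL-Probability.Probability"
begin

text \<open>Events determined by the past (X_0,...,X_n): the sigma-algebra generated
  by these random variables consists exactly of the preimages of measurable
  sets of the product space.\<close>
definition past_events :: "'w measure \<Rightarrow> (nat \<Rightarrow> 'w \<Rightarrow> real) \<Rightarrow> nat \<Rightarrow> 'w set set" where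
  "past_events M X n =
     {{\<omega> \<in> space M. (\<lambda>i\<in>{..n}. X i \<omega>) \<in> C} | C. C \<in> sets (Pi\<^sub>M {..n} (\<lambda>_. borel))}"

text \<open>The Y-sojourn (state 1)
  started at jump time a has distribution function GY a; the Z-sojourn (state 0)
  started at a has distribution GZ a (a probability kernel on [0,oo), arbitrary,
  not necessarily absolutely continuous).  Conditional distributions given the
  past are expressed by the defining property of regular conditional laws.\<close>
definition alt_nhsm ::
  "'w measure \<Rightarrow> (nat \<Rightarrow> 'w \<Rightarrow> real) \<Rightarrow> (real \<Rightarrow> real \<Rightarrow> real) \<Rightarrow> (real \<Rightarrow> real measure) \<Rightarrow> bool" where
  "alt_nhsm M X GY GZ \<longleftrightarrow>
     prob_space M \<and>
     (\<forall>n. X n \<in> borel_measurable M) \<and>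
     (\<forall>\<omega>\<in>space M. X 0 \<omega> = 0) \<and>
     (\<forall>n. \<forall>\<omega>\<in>space M. X n \<omega> \<le> X (Suc n) \<omega>) \<and>
     GZ \<in> borel \<rightarrow>\<^sub>M prob_algebra borel \<and>
     (\<forall>a. emeasure (GZ a) {..<0} = 0) \<and>
     (\<forall>n. even n \<longrightarrow> (\<forall>E\<in>past_events M X n. \<forall>l\<ge>0.
         emeasure M ({\<omega>\<in>space M. X (Suc n) \<omega> - X n \<omega> \<le> l} \<inter> E) =
         (\<integral>\<^sup>+\<omega>\<in>E. ennreal (GY (X n \<omega>) l) \<partial>M))) \<and>
     (\<forall>n. odd n \<longrightarrow> (\<forall>E\<in>past_events M X n. \<forall>B\<in>sets borel.
         emeasure M ({\<omega>\<in>space M. X (Suc n) \<omega> - X n \<omega> \<in> B} \<inter> E) =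
         (\<integral>\<^sup>+\<omega>\<in>E. emeasure (GZ (X n \<omega>)) B \<partial>M)))"

definition renewal_function :: "'w measure \<Rightarrow> (nat \<Rightarrow> 'w \<Rightarrow> real) \<Rightarrow> real \<Rightarrow> ennreal" where
  "renewal_function M X t = (\<Sum>n. emeasure M {\<omega>\<in>space M. X (2 * Suc n) \<omega> \<le> t})"

end

theory Submission
  imports Defs
begin


lemma ind_split:
  fixes N :: "real measure" and k :: nat
  assumes N: "prob_space N"
  assumes phi[measurable]: "phi \<in> borel_measurable ((PiM UNIV (\<lambda>_. N)) \<Otimes>\<^sub>M N)"
  assumes dep: "\<And>\<omega> \<omega>' e. (\<forall>j<k. \<omega> j = \<omega>' j) \<Longrightarrow> phi (\<omega>, e) = phi (\<omega>', e)"
  shows "(\<integral>\<^sup>+\<omega>. phi (\<omega>, \<omega> k) \<partial>PiM UNIV (\<lambda>_. N)) = (\<integral>\<^sup>+\<omega>. \<integral>\<^sup>+e. phi (\<omega>, e) \<partial>N \<partial>PiM UNIV (\<lambda>_. N))"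
proof -
  interpret sequence_space N by (simp add: sequence_space_def product_prob_space_def product_sigma_finite_def N prob_space_imp_sigma_finite product_prob_space_axioms_def)
  interpret SS: pair_sigma_finite S S by unfold_locales
  have mk[measurable]: "(\<lambda>\<omega>. \<omega> k) \<in> measurable S N" by measurable
  have "(\<integral>\<^sup>+\<omega>. phi (\<omega>, \<omega> k) \<partial>S) = (\<integral>\<^sup>+\<omega>. phi (\<omega>, \<omega> k) \<partial>distr (S \<Otimes>\<^sub>M S) S (\<lambda>(\<omega>, \<omega>'). comb_seq k \<omega> \<omega>'))"
    by (simp add: PiM_comb_seq)
  also have "\<dots> = (\<integral>\<^sup>+x. phi (comb_seq k (fst x) (snd x), comb_seq k (fst x) (snd x) k) \<partial>(S \<Otimes>\<^sub>M S))"
    by (subst nn_integral_distr) (auto simp: split_beta' measurable_comb_seq)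
  also have "\<dots> = (\<integral>\<^sup>+x. phi (fst x, snd x 0) \<partial>(S \<Otimes>\<^sub>M S))"
  proof (rule nn_integral_cong)
    fix x :: "(nat \<Rightarrow> real) \<times> (nat \<Rightarrow> real)"
    have "comb_seq k (fst x) (snd x) k = snd x 0" by (simp add: comb_seq_def)
    moreover have "phi (comb_seq k (fst x) (snd x), e) = phi (fst x, e)" for e
      by (rule dep) (simp add: comb_seq_def)
    ultimately show "phi (comb_seq k (fst x) (snd x), comb_seq k (fst x) (snd x) k) = phi (fst x, snd x 0)" by simp
  qed
  also have "\<dots> = (\<integral>\<^sup>+\<omega>. \<integral>\<^sup>+\<omega>'. phi (\<omega>, \<omega>' 0) \<partial>S \<partial>S)"
  proof -
    have sf: "sigma_finite_measure S" using prob_space_imp_sigma_finite[OF prob_space_PiM[of UNIV "\<lambda>_. N", OF N]] by simp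
    have "(\<lambda>x. phi (fst x, snd x 0)) \<in> borel_measurable (S \<Otimes>\<^sub>M S)" by measurable
    from sigma_finite_measure.nn_integral_fst[OF sf this] show ?thesis by simp
  qed
  also have "\<dots> = (\<integral>\<^sup>+\<omega>. \<integral>\<^sup>+e. phi (\<omega>, e) \<partial>N \<partial>S)"
  proof (rule nn_integral_cong)
    fix \<omega> :: "nat \<Rightarrow> real" assume om: "\<omega> \<in> space S"
    have "(\<integral>\<^sup>+\<omega>'. phi (\<omega>, \<omega>' 0) \<partial>S) = (\<integral>\<^sup>+e. phi (\<omega>, e) \<partial>distr S N (\<lambda>\<omega>'. \<omega>' 0))"
      using measurable_Pair2[OF phi om] by (subst nn_integral_distr) auto
    also have "\<dots> = (\<integral>\<^sup>+e. phi (\<omega>, e) \<partial>N)" by (simp add: PiM_component)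
    finally show "(\<integral>\<^sup>+\<omega>'. phi (\<omega>, \<omega>' 0) \<partial>S) = (\<integral>\<^sup>+e. phi (\<omega>, e) \<partial>N)" .
  qed
  finally show ?thesis .
qed


locale rsetup =
  fixes \<alpha> b c :: real and J :: nat and A :: "nat \<Rightarrow> real set" and \<delta> :: "nat \<Rightarrow> real"
  assumes alpha: "\<alpha> > 0" and b1: "b \<ge> 1"
    and Ameas: "\<forall>j\<in>{1..J}. A j \<in> sets borel"
    and Adisj: "disjoint_family_on A {1..J}"
    and Aun: "(\<Union>j\<in>{1..J}. A j) = {0..}"
    and dpos: "\<forall>j\<in>{1..J}. \<delta> j > 0"
    and dle: "\<forall>j\<in>{1..J}. \<delta> j \<le> \<alpha> * (b - 1)"
begin

definition "lam a = \<alpha> * (b + sin (c * a))"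
definition "Lmin = \<alpha> * (b - 1)"
definition "Lmax = \<alpha> * (b + 1)"
definition "m s = (\<Sum>j=1..J. \<delta> j * indicator (A j) s)"
definition "dmin = Min (\<delta> ` {1..J})"

lemma J_pos: "1 \<le> J"
proof (rule ccontr)
  assume "\<not> 1 \<le> J" then have "J = 0" by simp
  with Aun have "{0::real..} = {}" by simp
  then show False by auto
qed

lemma b_gt: "b > 1"
proof -
  have "\<delta> 1 > 0" "\<delta> 1 \<le> \<alpha> * (b - 1)" using dpos dle J_pos by auto
  then have "\<alpha> * (b - 1) > 0" by linarith
  with alpha show ?thesis by (simp add: zero_less_mult_iff)
qed

lemma Lmin_pos: "Lmin > 0" using alpha b_gt by (simp add: Lmin_def)
lemma Lmin_le_Lmax: "Lmin \<le> Lmax" using alpha by (simp add: Lmin_def Lmax_def)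

lemma lam_ge: "Lmin \<le> lam a"
proof -
  have "b - 1 \<le> b + sin (c * a)" by simp
  then show ?thesis using alpha unfolding Lmin_def lam_def by (intro mult_left_mono) auto
qed

lemma lam_le: "lam a \<le> Lmax"
proof -
  have "b + sin (c * a) \<le> b + 1" by simp
  then show ?thesis using alpha unfolding Lmax_def lam_def by (intro mult_left_mono) auto
qed

lemma lam_pos: "lam a > 0" using lam_ge[of a] Lmin_pos by linarith

lemma lam_0: "lam 0 = \<alpha> * b" by (simp add: lam_def)

lemma lam_cont: "continuous_on UNIV lam"
  unfolding lam_def by (intro continuous_intros)

lemma lam_meas[measurable]: "lam \<in> borel_measurable borel"
  using lam_cont by (rule borel_measurable_continuous_onI)

lemma A_nonneg: "j \<in> {1..J} \<Longrightarrow> s \<in> A j \<Longrightarrow> 0 \<le> s"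
  using Aun by auto

lemma m_eq: assumes j: "j \<in> {1..J}" and s: "s \<in> A j" shows "m s = \<delta> j"
proof -
  have "m s = \<delta> j * indicator (A j) s + (\<Sum>i\<in>{1..J}-{j}. \<delta> i * indicator (A i) s)"
    unfolding m_def using j by (subst sum.remove[of _ j]) auto
  also have "(\<Sum>i\<in>{1..J}-{j}. \<delta> i * indicator (A i) s) = 0"
  proof (rule sum.neutral, rule ballI)
    fix i assume "i \<in> {1..J}-{j}"
    then have i: "i \<in> {1..J}" "i \<noteq> j" by auto
    then have "A i \<inter> A j = {}" using Adisj j unfolding disjoint_family_on_def by auto
    with s have "s \<notin> A i" by auto
    then show "\<delta> i * indicator (A i) s = 0" by simp
  qed
  finally show ?thesis using s by simp
qed

lemma m_neg: "s < 0 \<Longrightarrow> m s = 0"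
proof -
  assume s: "s < 0"
  show ?thesis unfolding m_def
  proof (rule sum.neutral, rule ballI)
    fix j assume j: "j \<in> {1..J}"
    have "s \<notin> A j" using A_nonneg[OF j] s by force
    then show "\<delta> j * indicator (A j) s = 0" by simp
  qed
qed

lemma dmin_le: "j \<in> {1..J} \<Longrightarrow> dmin \<le> \<delta> j"
  unfolding dmin_def by (rule Min_le) auto

lemma dmin_pos: "dmin > 0"
proof -
  have "dmin \<in> \<delta> ` {1..J}" unfolding dmin_def using J_pos by (intro Min_in) auto
  then show ?thesis using dpos by auto
qed

lemma m_bounds: assumes "0 \<le> s" shows "dmin \<le> m s" "m s \<le> Lmin"
proof -
  have "s \<in> (\<Union>j\<in>{1..J}. A j)" using Aun assms by auto
  then obtain j where j: "j \<in> {1..J}" "s \<in> A j" by blast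
  then show "dmin \<le> m s" "m s \<le> Lmin" using m_eq[OF j] dmin_le[OF j(1)] dle by (auto simp: Lmin_def)
qed

lemma m_nonneg: "0 \<le> m s"
  using m_bounds(1)[of s] dmin_pos m_neg[of s] by (cases "s < 0") auto

lemma m_le: "m s \<le> Lmin"
  using m_bounds(2)[of s] Lmin_pos m_neg[of s] by (cases "s < 0") auto

lemma m_meas[measurable]: "m \<in> borel_measurable borel"
  unfolding m_def using Ameas by (intro borel_measurable_sum) (auto intro!: borel_measurable_indicator)

end


context rsetup begin

definition "rho = density lborel (\<lambda>s. ennreal (m s))"
definition "Mf t = enn2real (emeasure rho {..t})"

lemma sets_rho[simp, measurable_cong]: "sets rho = sets borel" by (simp add: rho_def)
lemma space_rho[simp]: "space rho = UNIV" by (simp add: rho_def)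

lemma nn_integral_rho: "f \<in> borel_measurable borel \<Longrightarrow> (\<integral>\<^sup>+s. f s \<partial>rho) = (\<integral>\<^sup>+s. ennreal (m s) * f s \<partial>lborel)"
  unfolding rho_def by (subst nn_integral_density) auto

lemma emeasure_rho: "B \<in> sets borel \<Longrightarrow> emeasure rho B = (\<integral>\<^sup>+s. ennreal (m s) * indicator B s \<partial>lborel)"
  unfolding rho_def by (subst emeasure_density) auto

lemma rho_Ioc_le: assumes "v \<le> u" shows "emeasure rho {v<..u} \<le> ennreal (Lmin * (u - v))"
proof -
  have "emeasure rho {v<..u} \<le> (\<integral>\<^sup>+s. ennreal Lmin * indicator {v<..u} s \<partial>lborel)"
    unfolding emeasure_rho[OF greaterThanAtMost_borel]
    by (intro nn_integral_mono) (auto simp: m_le intro!: ennreal_leI split: split_indicator)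
  also have "\<dots> = ennreal Lmin * ennreal (u - v)"
    using assms by (subst nn_integral_cmult_indicator) auto
  finally show ?thesis using Lmin_pos assms by (simp add: ennreal_mult)
qed

lemma rho_Ioc_ge: assumes "0 \<le> v" "v \<le> u" shows "ennreal (dmin * (u - v)) \<le> emeasure rho {v<..u}"
proof -
  have "ennreal dmin * ennreal (u - v) = (\<integral>\<^sup>+s. ennreal dmin * indicator {v<..u} s \<partial>lborel)"
    using assms by (subst nn_integral_cmult_indicator) auto
  also have "\<dots> \<le> emeasure rho {v<..u}"
    unfolding emeasure_rho[OF greaterThanAtMost_borel] using assms
    by (intro nn_integral_mono) (auto simp: m_bounds intro!: ennreal_leI split: split_indicator)
  finally show ?thesis using dmin_pos assms by (simp add: ennreal_mult)
qed

lemma rho_0: "emeasure rho {..0} = 0"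
proof -
  have le: "ennreal (m s) * indicator {..0} s \<le> ennreal Lmin * indicator {0} s" for s :: real
  proof (cases "s < 0")
    case True then show ?thesis by (simp add: m_neg)
  next
    case False then show ?thesis using m_le[of s] by (cases "s = 0") (auto intro!: ennreal_leI)
  qed
  have "emeasure rho {..0} \<le> (\<integral>\<^sup>+s. ennreal Lmin * indicator {0::real} s \<partial>lborel)"
    unfolding emeasure_rho[OF atMost_borel] by (intro nn_integral_mono le)
  also have "\<dots> = 0" by (subst nn_integral_cmult_indicator) auto
  finally show ?thesis by simp
qed

lemma rho_split: assumes "v \<le> u" shows "emeasure rho {..u} = emeasure rho {..v} + emeasure rho {v<..u}"
proof -
  have "{..u} = {..v} \<union> {v<..u}" using assms by auto
  then show ?thesis by (simp, subst plus_emeasure) auto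
qed

lemma rho_le: "emeasure rho {..t} \<le> ennreal (Lmin * max 0 t)"
proof (cases "t \<le> 0")
  case True
  then have "emeasure rho {..t} \<le> emeasure rho {..0}" by (intro emeasure_mono) auto
  then show ?thesis using rho_0 by simp
next
  case False
  then show ?thesis using rho_split[of 0 t] rho_0 rho_Ioc_le[of 0 t] by simp
qed

lemma rho_fin: "emeasure rho {..t} = ennreal (Mf t)"
proof -
  have "emeasure rho {..t} \<noteq> \<infinity>" using rho_le[of t] by (auto simp: top_unique)
  then show ?thesis unfolding Mf_def by (simp add: ennreal_enn2real_if)
qed

lemma Mf_nonneg: "0 \<le> Mf t" by (simp add: Mf_def)

lemma Mf_le_0: "t \<le> 0 \<Longrightarrow> Mf t = 0"
proof -
  assume "t \<le> 0"
  then have "emeasure rho {..t} \<le> emeasure rho {..0}" by (intro emeasure_mono) auto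
  then show ?thesis using rho_0 by (simp add: Mf_def)
qed

lemma Mf_diff: assumes "v \<le> u" shows "Mf u = Mf v + enn2real (emeasure rho {v<..u})"
proof -
  have f: "emeasure rho {v<..u} \<noteq> \<infinity>" using rho_Ioc_le[OF assms] by (auto simp: top_unique)
  have "ennreal (Mf u) = ennreal (Mf v) + emeasure rho {v<..u}" using rho_split[OF assms] rho_fin by simp
  then have "ennreal (Mf u) = ennreal (Mf v + enn2real (emeasure rho {v<..u}))"
    using f by (simp add: ennreal_enn2real_if ennreal_plus Mf_nonneg)
  then show ?thesis using ennreal_inj Mf_nonneg enn2real_nonneg add_nonneg_nonneg by metis
qed

lemma Mf_lip: assumes "v \<le> u" shows "Mf u - Mf v \<le> Lmin * (u - v)"
proof -
  have "enn2real (emeasure rho {v<..u}) \<le> Lmin * (u - v)"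
    using rho_Ioc_le[OF assms] Lmin_pos assms by (simp add: enn2real_leI)
  then show ?thesis using Mf_diff[OF assms] by simp
qed

lemma Mf_grow: assumes "0 \<le> v" "v \<le> u" shows "dmin * (u - v) \<le> Mf u - Mf v"
proof -
  have f: "emeasure rho {v<..u} \<noteq> \<infinity>" using rho_Ioc_le[OF assms(2)] by (auto simp: top_unique)
  have "dmin * (u - v) \<le> enn2real (emeasure rho {v<..u})"
  proof -
    have "enn2real (ennreal (dmin * (u - v))) \<le> enn2real (emeasure rho {v<..u})"
      using rho_Ioc_ge[OF assms] f by (intro enn2real_mono) (auto simp: top.not_eq_extremum)
    then show ?thesis using dmin_pos assms by simp
  qed
  then show ?thesis using Mf_diff[OF assms(2)] by simp
qed

lemma Mf_mono: "v \<le> u \<Longrightarrow> Mf v \<le> Mf u"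
  using Mf_diff[of v u] by simp

lemma Mf_strict: "0 \<le> v \<Longrightarrow> v < u \<Longrightarrow> Mf v < Mf u"
  using Mf_grow[of v u] dmin_pos by (smt (verit) mult_pos_pos)

lemma Mf_ge: "0 \<le> t \<Longrightarrow> dmin * t \<le> Mf t"
  using Mf_grow[of 0 t] Mf_le_0[of 0] by simp

lemma Mf_cont: "continuous_on S Mf"
proof -
  have "Lmin-lipschitz_on S Mf"
  proof (rule lipschitz_onI)
    fix x y assume "x \<in> S" "y \<in> S"
    show "dist (Mf x) (Mf y) \<le> Lmin * dist x y"
    proof (cases "x \<le> y")
      case True then show ?thesis using Mf_lip[of x y] Mf_mono[of x y] by (simp add: dist_real_def)
    next
      case False then show ?thesis using Mf_lip[of y x] Mf_mono[of y x] by (simp add: dist_real_def)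
    qed
  qed (use Lmin_pos in simp)
  then show ?thesis by (rule lipschitz_on_continuous_on)
qed

end


definition "EXP = density lborel (exponential_density (1::real))"

lemma EXP_prob: "prob_space EXP"
  unfolding EXP_def by (rule prob_space_exponential_density) simp

lemma sets_EXP[simp, measurable_cong]: "sets EXP = sets borel" by (simp add: EXP_def)
lemma space_EXP[simp]: "space EXP = UNIV" by (simp add: EXP_def)

lemma EXP_le: "0 \<le> x \<Longrightarrow> emeasure EXP {..x} = ennreal (1 - exp (- x))"
  unfolding EXP_def by (simp add: emeasure_erlang_density erlang_CDF_def)

lemma EXP_le_neg: "x < 0 \<Longrightarrow> emeasure EXP {..x} = 0"
  unfolding EXP_def by (simp add: emeasure_erlang_density erlang_CDF_def)

context rsetup begin

definition "Yf s e = s + max 0 e / lam s"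
definition "g0 s u = (if s \<le> u then 1 - exp (- (lam s * (u - s))) else 0)"
definition "Fe u = ennreal (g0 0 u) + (\<integral>\<^sup>+s. ennreal (m s) * ennreal (g0 s u) \<partial>lborel)"
definition "F u = enn2real (Fe u)"

lemma Yf_meas[measurable]: "(\<lambda>x. Yf (fst x) (snd x)) \<in> borel_measurable (borel \<Otimes>\<^sub>M borel)"
  unfolding Yf_def by measurable

lemma Yf_ge: "s \<le> Yf s e" unfolding Yf_def using lam_pos[of s] by simp

lemma Yf_le_iff: "Yf s e \<le> u \<longleftrightarrow> s \<le> u \<and> e \<le> lam s * (u - s)"
proof -
  have l: "lam s > 0" by (rule lam_pos)
  have "Yf s e \<le> u \<longleftrightarrow> max 0 e / lam s \<le> u - s" unfolding Yf_def by linarith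
  also have "\<dots> \<longleftrightarrow> max 0 e \<le> lam s * (u - s)" using l by (simp add: divide_le_eq mult.commute)
  also have "\<dots> \<longleftrightarrow> s \<le> u \<and> e \<le> lam s * (u - s)"
    using l by (simp add: zero_le_mult_iff)
  finally show ?thesis .
qed

lemma G_eq: "emeasure EXP {e. Yf s e \<le> u} = ennreal (g0 s u)"
proof (cases "s \<le> u")
  case True
  then have "{e. Yf s e \<le> u} = {..lam s * (u - s)}" by (auto simp: Yf_le_iff)
  moreover have "0 \<le> lam s * (u - s)" using True lam_pos[of s] by simp
  ultimately show ?thesis using True by (simp add: EXP_le g0_def)
next
  case False
  then have "{e. Yf s e \<le> u} = {}" by (auto simp: Yf_le_iff)
  then show ?thesis using False by (simp add: g0_def)
qed

lemma g0_nonneg: "0 \<le> g0 s u" using lam_pos[of s] by (simp add: g0_def mult_nonneg_nonneg)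
lemma g0_le1: "g0 s u \<le> 1" by (simp add: g0_def)
lemma g0_gt: "u < s \<Longrightarrow> g0 s u = 0" by (simp add: g0_def)

lemma g0_mono: "v \<le> u \<Longrightarrow> g0 s v \<le> g0 s u"
  using lam_pos[of s] by (auto simp: g0_def mult_left_mono)

lemma exp_lip: "0 \<le> (x::real) \<Longrightarrow> x \<le> y \<Longrightarrow> exp (- x) - exp (- y) \<le> y - x"
proof -
  assume xy: "0 \<le> x" "x \<le> y"
  have "exp (- x) - exp (- y) = exp (- x) * (1 - exp (- (y - x)))"
  proof -
    have "exp (- x) * exp (x - y) = exp (- y)" by (subst exp_add[symmetric]) simp
    then show ?thesis by (simp add: algebra_simps)
  qed
  also have "\<dots> \<le> 1 * (y - x)"
  proof (rule mult_mono)
    show "1 - exp (- (y - x)) \<le> y - x" using exp_ge_add_one_self[of "- (y - x)"] by linarith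
  qed (use xy in auto)
  finally show ?thesis by simp
qed

lemma g0_lip: assumes "v \<le> u" shows "g0 s u \<le> g0 s v + Lmax * (u - v)"
proof -
  have l: "0 < lam s" "lam s \<le> Lmax" using lam_pos lam_le by auto
  consider "u < s" | "v < s" "s \<le> u" | "s \<le> v" using assms by linarith
  then show ?thesis
  proof cases
    case 1 then show ?thesis using g0_nonneg[of s v] l assms by (simp add: g0_def)
  next
    case 2
    have "1 - exp (- (lam s * (u - s))) \<le> lam s * (u - s)" using exp_ge_add_one_self[of "- (lam s * (u - s))"] by simp
    also have "\<dots> \<le> Lmax * (u - v)" using l 2 by (intro mult_mono) auto
    finally show ?thesis using 2 by (simp add: g0_def)
  next
    case 3
    have "exp (- (lam s * (v - s))) - exp (- (lam s * (u - s))) \<le> lam s * (u - s) - lam s * (v - s)"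
      using l 3 assms by (intro exp_lip) (auto intro: mult_left_mono)
    also have "\<dots> = lam s * (u - v)" by (simp add: algebra_simps)
    also have "\<dots> \<le> Lmax * (u - v)" using l assms by (intro mult_right_mono) auto
    finally show ?thesis using 3 assms by (simp add: g0_def)
  qed
qed

lemma g0_strict0: "0 \<le> v \<Longrightarrow> v < u \<Longrightarrow> g0 0 v < g0 0 u"
  using lam_pos[of 0] by (simp add: g0_def)

lemma g0_meas[measurable]: "(\<lambda>s. g0 s u) \<in> borel_measurable borel"
  unfolding g0_def by measurable

lemma int_le_rho: "(\<integral>\<^sup>+s. ennreal (m s) * ennreal (g0 s u) \<partial>lborel) \<le> emeasure rho {..u}"
  unfolding emeasure_rho[OF atMost_borel]
  by (intro nn_integral_mono) (auto simp: g0_le1 g0_gt split: split_indicator intro!: mult_left_le)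

lemma Fe_fin: "Fe u = ennreal (F u)"
proof -
  have "Fe u \<le> ennreal 1 + emeasure rho {..u}" unfolding Fe_def
    by (intro add_mono int_le_rho) (simp add: g0_le1)
  then have "Fe u \<noteq> \<infinity>" using rho_fin[of u] by (auto simp: top_unique ennreal_plus[symmetric])
  then show ?thesis by (simp add: F_def ennreal_enn2real_if)
qed

lemma F_nonneg: "0 \<le> F u" by (simp add: F_def)

lemma Fe_mono: "v \<le> u \<Longrightarrow> Fe v \<le> Fe u"
  unfolding Fe_def by (intro add_mono nn_integral_mono mult_left_mono ennreal_leI g0_mono) auto

lemma F_mono: "v \<le> u \<Longrightarrow> F v \<le> F u"
  using Fe_mono[of v u] Fe_fin[of u] Fe_fin[of v] F_nonneg by simp

lemma F_meas[measurable]: "F \<in> borel_measurable borel"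
  by (rule borel_measurable_mono) (auto simp: mono_def F_mono)

end


context rsetup begin

definition "Ie u = (\<integral>\<^sup>+s. ennreal (m s) * ennreal (g0 s u) \<partial>lborel)"
definition "I u = enn2real (Ie u)"

lemma Ie_fin: "Ie u = ennreal (I u)"
proof -
  have "Ie u \<noteq> \<infinity>" using int_le_rho[of u] rho_fin[of u] unfolding Ie_def by (auto simp: top_unique)
  then show ?thesis by (simp add: I_def ennreal_enn2real_if)
qed

lemma I_nonneg: "0 \<le> I u" by (simp add: I_def)

lemma F_eq: "F u = g0 0 u + I u"
proof -
  have "Fe u = ennreal (g0 0 u + I u)" unfolding Fe_def Ie_def[symmetric] Ie_fin
    by (simp add: ennreal_plus g0_nonneg I_nonneg)
  then have "ennreal (F u) = ennreal (g0 0 u + I u)" using Fe_fin[of u] by simp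
  then show ?thesis using g0_nonneg[of 0 u] I_nonneg[of u] F_nonneg[of u] by (subst (asm) ennreal_inj) auto
qed

lemma I_mono: "v \<le> u \<Longrightarrow> I v \<le> I u"
proof -
  assume "v \<le> u"
  then have "Ie v \<le> Ie u" unfolding Ie_def
    by (intro nn_integral_mono mult_left_mono ennreal_leI g0_mono) auto
  then show ?thesis by (simp add: Ie_fin I_nonneg)
qed

lemma F_strict: "0 \<le> v \<Longrightarrow> v < u \<Longrightarrow> F v < F u"
  using g0_strict0[of v u] I_mono[of v u] by (simp add: F_eq)

lemma F_0: "F 0 = 0"
proof -
  have "Ie 0 = (\<integral>\<^sup>+(s::real). 0 \<partial>lborel)" unfolding Ie_def
  proof (rule nn_integral_cong)
    fix s :: real
    show "ennreal (m s) * ennreal (g0 s 0) = 0"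
      by (cases "s < 0"; cases "s = 0") (auto simp: m_neg g0_gt g0_def)
  qed
  then have "I 0 = 0" by (simp add: I_def)
  then show ?thesis by (simp add: F_eq g0_def)
qed

lemma I_lip: assumes "v \<le> u" shows "I u \<le> I v + Lmax * (u - v) * Mf u"
proof -
  have "Ie u \<le> (\<integral>\<^sup>+s. ennreal (m s) * ennreal (g0 s v) + ennreal (Lmax * (u - v)) * (ennreal (m s) * indicator {..u} s) \<partial>lborel)"
    unfolding Ie_def
  proof (rule nn_integral_mono)
    fix s :: real
    show "ennreal (m s) * ennreal (g0 s u) \<le> ennreal (m s) * ennreal (g0 s v) + ennreal (Lmax * (u - v)) * (ennreal (m s) * indicator {..u} s)"
    proof (cases "s \<le> u")
      case True
      have "m s * g0 s u \<le> m s * (g0 s v + Lmax * (u - v))"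
        using g0_lip[OF assms, of s] m_nonneg[of s] by (intro mult_left_mono) auto
      then have "ennreal (m s * g0 s u) \<le> ennreal (m s * g0 s v + Lmax * (u - v) * m s)"
        by (intro ennreal_leI) (simp add: algebra_simps)
      moreover have "ennreal (m s * g0 s v + Lmax * (u - v) * m s) = ennreal (m s) * ennreal (g0 s v) + ennreal (Lmax * (u - v)) * ennreal (m s)"
        using m_nonneg[of s] g0_nonneg[of s v] Lmin_le_Lmax Lmin_pos assms by (simp add: ennreal_mult)
      ultimately show ?thesis using True by (simp add: ennreal_mult[OF m_nonneg g0_nonneg, symmetric])
    next
      case False then show ?thesis by (simp add: g0_gt)
    qed
  qed
  also have "\<dots> = Ie v + ennreal (Lmax * (u - v)) * emeasure rho {..u}"
    unfolding Ie_def emeasure_rho[OF atMost_borel]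
    by (subst nn_integral_add) (auto simp: nn_integral_cmult)
  also have "\<dots> = ennreal (I v + Lmax * (u - v) * Mf u)"
    using Lmin_le_Lmax Lmin_pos assms I_nonneg Mf_nonneg
    by (simp add: Ie_fin rho_fin ennreal_mult)
  finally have le: "ennreal (I u) \<le> ennreal (I v + Lmax * (u - v) * Mf u)" using Ie_fin[of u] by simp
  have nn: "0 \<le> I v + Lmax * (u - v) * Mf u" using I_nonneg[of v] Mf_nonneg[of u] Lmin_le_Lmax Lmin_pos assms
    by (intro add_nonneg_nonneg mult_nonneg_nonneg) auto
  show ?thesis using le nn by (simp only: ennreal_le_iff)
qed

lemma F_lip: assumes "v \<le> u" shows "F u - F v \<le> Lmax * (u - v) * (1 + Mf u)"
  using I_lip[OF assms] g0_lip[OF assms, of 0] by (simp add: F_eq algebra_simps)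

lemma F_cont: "continuous_on {..B} F"
proof -
  have K: "0 \<le> Lmax * (1 + Mf B)" using Lmin_le_Lmax Lmin_pos Mf_nonneg[of B] by simp
  have "(Lmax * (1 + Mf B))-lipschitz_on {..B} F"
  proof (rule lipschitz_onI)
    fix x y assume xy: "x \<in> {..B}" "y \<in> {..B}"
    have *: "F u - F v \<le> Lmax * (1 + Mf B) * (u - v)" if "v \<le> u" "u \<le> B" for u v
    proof -
      have "F u - F v \<le> Lmax * (u - v) * (1 + Mf u)" by (rule F_lip[OF that(1)])
      also have "\<dots> \<le> Lmax * (u - v) * (1 + Mf B)"
        using that Lmin_le_Lmax Lmin_pos Mf_mono[of u B] by (intro mult_left_mono) auto
      finally show ?thesis by (simp add: algebra_simps)
    qed
    show "dist (F x) (F y) \<le> Lmax * (1 + Mf B) * dist x y"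
    proof (cases "x \<le> y")
      case True then show ?thesis using *[of x y] xy F_mono[of x y] by (simp add: dist_real_def)
    next
      case False then show ?thesis using *[of y x] xy F_mono[of y x] by (simp add: dist_real_def)
    qed
  qed (rule K)
  then show ?thesis by (rule lipschitz_on_continuous_on)
qed

lemma F_ge_Mf: assumes a: "0 \<le> a" shows "Mf a \<le> F a"
proof -
  define h where "h s = ennreal (Lmin * exp (- (Lmin * (a - s)))) * indicator {0..a} s" for s
  have h_meas[measurable]: "h \<in> borel_measurable borel" unfolding h_def by measurable
  have pw: "ennreal (m s) * indicator {..a} s \<le> ennreal (m s) * ennreal (g0 s a) + h s" for s
  proof (cases "0 \<le> s \<and> s \<le> a")
    case True
    have l: "Lmin \<le> lam s" "0 < Lmin" using lam_ge Lmin_pos by auto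
    have e: "exp (- (lam s * (a - s))) \<le> exp (- (Lmin * (a - s)))"
      using True l by (intro exp_mono) (auto intro: mult_right_mono)
    have "m s * exp (- (lam s * (a - s))) \<le> Lmin * exp (- (Lmin * (a - s)))"
      using m_le[of s] m_nonneg[of s] e by (intro mult_mono) auto
    then have "m s \<le> m s * g0 s a + Lmin * exp (- (Lmin * (a - s)))"
      using True by (simp add: g0_def algebra_simps)
    then have "ennreal (m s) \<le> ennreal (m s * g0 s a + Lmin * exp (- (Lmin * (a - s))))"
      by (rule ennreal_leI)
    moreover have "ennreal (m s * g0 s a + Lmin * exp (- (Lmin * (a - s)))) = ennreal (m s) * ennreal (g0 s a) + ennreal (Lmin * exp (- (Lmin * (a - s))))"
      using m_nonneg[of s] g0_nonneg[of s a] Lmin_pos by (simp add: ennreal_mult)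
    ultimately show ?thesis using True by (simp add: h_def)
  next
    case False
    then show ?thesis
    proof (cases "s < 0")
      case True then show ?thesis by (simp add: m_neg)
    next
      case False2: False
      with False have "a < s" by auto
      then show ?thesis by simp
    qed
  qed
  have hint: "(\<integral>\<^sup>+s. h s \<partial>lborel) = ennreal (1 - exp (- (Lmin * a)))"
  proof -
    have "(\<integral>\<^sup>+s. h s \<partial>lborel) = ennreal \<bar>- 1\<bar> * (\<integral>\<^sup>+x. h (a + (- 1) * x) \<partial>lborel)"
      by (rule nn_integral_real_affine) auto
    also have "\<dots> = (\<integral>\<^sup>+x. h (a - x) \<partial>lborel)" by simp
    also have "\<dots> = (\<integral>\<^sup>+x. ennreal (exponential_density Lmin x) * indicator {..a} x \<partial>lborel)"
      by (intro nn_integral_cong) (auto simp: h_def exponential_density_def mult.commute split: split_indicator)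
    also have "\<dots> = ennreal (erlang_CDF 0 Lmin a)"
      using Lmin_pos by (simp add: nn_integral_erlang_density)
    also have "\<dots> = ennreal (1 - exp (- (Lmin * a)))" using a by (simp add: erlang_CDF_def)
    finally show ?thesis .
  qed
  have "emeasure rho {..a} \<le> (\<integral>\<^sup>+s. ennreal (m s) * ennreal (g0 s a) + h s \<partial>lborel)"
    unfolding emeasure_rho[OF atMost_borel] by (intro nn_integral_mono pw)
  also have "\<dots> = Ie a + ennreal (1 - exp (- (Lmin * a)))"
    unfolding Ie_def hint[symmetric] by (subst nn_integral_add) auto
  also have "\<dots> \<le> Ie a + ennreal (g0 0 a)"
  proof -
    have "Lmin * a \<le> lam 0 * a" using a lam_ge[of 0] by (intro mult_right_mono) auto
    then have "1 - exp (- (Lmin * a)) \<le> g0 0 a" using a by (simp add: g0_def)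
    then show ?thesis by (intro add_left_mono ennreal_leI)
  qed
  also have "\<dots> = ennreal (F a)"
    using Fe_fin[of a] unfolding Fe_def Ie_def by (simp add: add.commute)
  finally show ?thesis using F_nonneg[of a] by (simp add: rho_fin)
qed

lemma F_inv: assumes c: "0 \<le> cc" shows "\<exists>u\<ge>0. F u = cc"
proof -
  define B where "B = cc / dmin"
  have B: "0 \<le> B" using c dmin_pos by (simp add: B_def)
  have "cc \<le> dmin * B" using dmin_pos by (simp add: B_def)
  also have "\<dots> \<le> Mf B" by (rule Mf_ge[OF B])
  also have "\<dots> \<le> F B" by (rule F_ge_Mf[OF B])
  finally have "cc \<le> F B" .
  moreover have "F 0 \<le> cc" using F_0 c by simp
  moreover have "continuous_on {0..B} F" using F_cont[of B] by (rule continuous_on_subset) auto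
  ultimately obtain u where "0 \<le> u" "u \<le> B" "F u = cc" using IVT'[of F 0 cc B] B by blast
  then show ?thesis by blast
qed

lemma F_le_iff: assumes "0 \<le> a" "0 \<le> u" shows "F a \<le> F u \<longleftrightarrow> a \<le> u"
proof
  assume "F a \<le> F u"
  show "a \<le> u"
  proof (rule ccontr)
    assume "\<not> a \<le> u"
    then have "F u < F a" using F_strict[of u a] assms by simp
    with \<open>F a \<le> F u\<close> show False by simp
  qed
qed (rule F_mono)

end


context rsetup begin

lemma Mf_inv: assumes y: "0 \<le> y" shows "\<exists>t\<ge>0. Mf t = y"
proof -
  define B where "B = y / dmin"
  have B: "0 \<le> B" using y dmin_pos by (simp add: B_def)
  have "y \<le> dmin * B" using dmin_pos by (simp add: B_def)
  also have "\<dots> \<le> Mf B" by (rule Mf_ge[OF B])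
  finally have "y \<le> Mf B" .
  moreover have "Mf 0 \<le> y" using Mf_le_0[of 0] y by simp
  ultimately obtain t where "0 \<le> t" "t \<le> B" "Mf t = y" using IVT'[of Mf 0 y B] B Mf_cont by blast
  then show ?thesis by blast
qed

definition "T a = (SOME t. 0 \<le> t \<and> Mf t = max 0 (F a))"

lemma T_prop: "0 \<le> T a \<and> Mf (T a) = max 0 (F a)"
  unfolding T_def by (rule someI_ex) (rule Mf_inv, simp)

lemma T_le_iff: "T a \<le> t \<longleftrightarrow> 0 \<le> t \<and> F a \<le> Mf t"
proof
  assume "T a \<le> t"
  moreover have "Mf (T a) \<le> Mf t" using \<open>T a \<le> t\<close> by (rule Mf_mono)
  ultimately show "0 \<le> t \<and> F a \<le> Mf t" using T_prop[of a] by auto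
next
  assume t: "0 \<le> t \<and> F a \<le> Mf t"
  show "T a \<le> t"
  proof (rule ccontr)
    assume "\<not> T a \<le> t"
    then have "Mf t < Mf (T a)" using t by (intro Mf_strict) auto
    moreover have "max 0 (F a) \<le> Mf t" using t Mf_nonneg[of t] by simp
    ultimately show False using T_prop[of a] by simp
  qed
qed

lemma T_ge: assumes "0 \<le> a" shows "a \<le> T a"
proof (rule ccontr)
  assume "\<not> a \<le> T a"
  then have "Mf (T a) < Mf a" using T_prop[of a] by (intro Mf_strict) auto
  moreover have "Mf a \<le> max 0 (F a)" using F_ge_Mf[OF assms] by simp
  ultimately show False using T_prop[of a] by (auto simp: max_def split: if_splits)
qed

lemma T_meas[measurable]: "T \<in> borel_measurable borel"
proof (subst borel_measurable_iff_le, intro allI)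
  fix t
  have "{w \<in> space borel. T w \<le> t} = (if 0 \<le> t then {w. F w \<le> Mf t} else {})"
    by (auto simp: T_le_iff)
  also have "\<dots> \<in> sets borel" by auto
  finally show "{w \<in> space borel. T w \<le> t} \<in> sets borel" .
qed

definition "T' a = max a (T a)"

lemma T'_meas[measurable]: "T' \<in> borel_measurable borel" unfolding T'_def by measurable
lemma T'_ge: "a \<le> T' a" by (simp add: T'_def)
lemma T'_nonneg: "0 \<le> T' a" using T_prop[of a] by (simp add: T'_def le_max_iff_disj)
lemma T'_eq: "0 \<le> a \<Longrightarrow> T' a = T a" using T_ge by (simp add: T'_def max_def)

definition "step s e = T' (Yf s e)"

lemma step_meas[measurable]: "(\<lambda>x. step (fst x) (snd x)) \<in> borel_measurable (borel \<Otimes>\<^sub>M borel)"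
  unfolding step_def using Yf_meas by measurable

lemma step_meas'[measurable (raw)]: "f \<in> borel_measurable M \<Longrightarrow> g \<in> borel_measurable M \<Longrightarrow> (\<lambda>x. step (f x) (g x)) \<in> borel_measurable M"
  using measurable_compose[OF measurable_Pair step_meas, of f M g] by simp

lemma Yf_meas'[measurable (raw)]: "f \<in> borel_measurable M \<Longrightarrow> g \<in> borel_measurable M \<Longrightarrow> (\<lambda>x. Yf (f x) (g x)) \<in> borel_measurable M"
  using measurable_compose[OF measurable_Pair Yf_meas, of f M g] by simp

lemma step_ge: "s \<le> step s e" unfolding step_def using Yf_ge[of s e] T'_ge[of "Yf s e"] by linarith

lemma step_le_iff: assumes "0 \<le> s" shows "step s e \<le> t \<longleftrightarrow> 0 \<le> t \<and> F (Yf s e) \<le> Mf t"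
proof -
  have "0 \<le> Yf s e" using Yf_ge[of s e] assms by linarith
  then show ?thesis unfolding step_def by (simp add: T'_eq T_le_iff)
qed

definition "P g s = (\<integral>\<^sup>+e. g (step s e) \<partial>EXP)"

lemma P_meas[measurable]: assumes [measurable]: "g \<in> borel_measurable borel" shows "P g \<in> borel_measurable borel"
proof -
  interpret EXP: prob_space EXP by (rule EXP_prob)
  show ?thesis unfolding P_def by measurable
qed

lemma Pn_meas[measurable]: assumes [measurable]: "g \<in> borel_measurable borel" shows "(P ^^ n) g \<in> borel_measurable borel"
  by (induction n) auto

end


context rsetup begin

definition "Om = PiM UNIV (\<lambda>_::nat. EXP)"

primrec Xp :: "nat \<Rightarrow> (nat \<Rightarrow> real) \<Rightarrow> real" where
  "Xp 0 \<omega> = 0"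
| "Xp (Suc n) \<omega> = (if even n then Yf (Xp n \<omega>) (\<omega> (n div 2)) else T' (Xp n \<omega>))"

lemma space_Om[simp]: "space Om = UNIV" by (simp add: Om_def space_PiM)

lemma Om_prob: "prob_space Om" unfolding Om_def by (rule prob_space_PiM) (rule EXP_prob)

lemma Xp_meas[measurable]: "Xp n \<in> borel_measurable Om"
proof (induction n)
  case 0 then show ?case by simp
next
  case (Suc n)
  have "(\<lambda>\<omega>. \<omega> (n div 2)) \<in> measurable Om EXP"
    unfolding Om_def by (rule measurable_component_singleton) simp
  then have c: "(\<lambda>\<omega>. \<omega> (n div 2)) \<in> borel_measurable Om"
    using measurable_cong_sets[OF refl sets_EXP, of Om] by simp
  show ?case
  proof (cases "even n")
    case True
    then have "Xp (Suc n) = (\<lambda>\<omega>. Yf (Xp n \<omega>) (\<omega> (n div 2)))" by (simp add: fun_eq_iff)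
    then show ?thesis using Yf_meas'[OF Suc.IH c] by simp
  next
    case False
    then have "Xp (Suc n) = (\<lambda>\<omega>. T' (Xp n \<omega>))" by (simp add: fun_eq_iff)
    then show ?thesis using measurable_compose[OF Suc.IH T'_meas] by simp
  qed
qed

lemma Xp_nonneg: "0 \<le> Xp n \<omega>"
  by (induction n) (auto intro: order_trans[OF _ Yf_ge] order_trans[OF _ T'_ge])

lemma Xp_mono: "Xp n \<omega> \<le> Xp (Suc n) \<omega>"
  by (simp add: Yf_ge T'_ge)

lemma Xp_step: "Xp (2 * Suc k) \<omega> = step (Xp (2 * k) \<omega>) (\<omega> k)"
proof -
  have "2 * Suc k = Suc (Suc (2 * k))" by simp
  then show ?thesis by (simp add: step_def)
qed

lemma Xp_dep: "i \<le> 2 * k \<Longrightarrow> (\<forall>j<k. \<omega> j = \<omega>' j) \<Longrightarrow> Xp i \<omega> = Xp i \<omega>'"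
proof (induction i)
  case 0 then show ?case by simp
next
  case (Suc i)
  then have IH: "Xp i \<omega> = Xp i \<omega>'" by simp
  show ?case
  proof (cases "even i")
    case True
    then have "i div 2 < k" using Suc.prems(1) by presburger
    then show ?thesis using IH True Suc.prems(2) by simp
  next
    case False then show ?thesis using IH by simp
  qed
qed

lemma markov: assumes g[measurable]: "g \<in> borel_measurable borel"
  shows "(\<integral>\<^sup>+\<omega>. g (Xp (2 * n) \<omega>) \<partial>Om) = (P ^^ n) g 0"
  using g
proof (induction n arbitrary: g)
  case 0
  interpret prob_space Om by (rule Om_prob)
  show ?case using emeasure_space_1 by simp
next
  case (Suc n)
  note [measurable] = Suc.prems
  have "(\<integral>\<^sup>+\<omega>. g (Xp (2 * Suc n) \<omega>) \<partial>Om) = (\<integral>\<^sup>+\<omega>. g (step (Xp (2 * n) \<omega>) (\<omega> n)) \<partial>Om)"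
    by (simp only: Xp_step)
  also have "\<dots> = (\<integral>\<^sup>+\<omega>. \<integral>\<^sup>+e. g (step (Xp (2 * n) \<omega>) e) \<partial>EXP \<partial>Om)"
  proof -
    have "(\<lambda>x. Xp (2 * n) (fst x)) \<in> borel_measurable (Pi\<^sub>M UNIV (\<lambda>_. EXP) \<Otimes>\<^sub>M EXP)"
      using Xp_meas[of "2*n"] unfolding Om_def by (intro measurable_compose[OF measurable_fst]) simp
    moreover have "snd \<in> borel_measurable (Pi\<^sub>M UNIV (\<lambda>_. EXP) \<Otimes>\<^sub>M EXP)"
      using measurable_snd[of "Pi\<^sub>M UNIV (\<lambda>_. EXP)" EXP] measurable_cong_sets[OF refl sets_EXP, of "Pi\<^sub>M UNIV (\<lambda>_. EXP) \<Otimes>\<^sub>M EXP"] by simp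
    ultimately have meas: "(\<lambda>x. g (step (Xp (2 * n) (fst x)) (snd x))) \<in> borel_measurable (Pi\<^sub>M UNIV (\<lambda>_. EXP) \<Otimes>\<^sub>M EXP)"
      using step_meas'[of _ _ snd] by (intro measurable_compose[OF _ Suc.prems]) auto
    have dep: "\<And>\<omega> \<omega>' e. \<forall>j<n. \<omega> j = \<omega>' j \<Longrightarrow> g (step (Xp (2 * n) (fst (\<omega>, e))) (snd (\<omega>, e))) = g (step (Xp (2 * n) (fst (\<omega>', e))) (snd (\<omega>', e)))"
      using Xp_dep[of "2*n" n] by (metis fst_conv snd_conv order_refl)
    show ?thesis using ind_split[OF EXP_prob meas dep] unfolding Om_def by simp
  qed
  also have "\<dots> = (\<integral>\<^sup>+\<omega>. P g (Xp (2 * n) \<omega>) \<partial>Om)" by (simp add: P_def)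
  also have "\<dots> = (P ^^ n) (P g) 0" by (rule Suc.IH) (rule P_meas[OF Suc.prems])
  also have "\<dots> = (P ^^ Suc n) g 0" by (simp add: funpow_Suc_right del: funpow.simps)
  finally show ?case .
qed

end


context rsetup begin

definition "GZ a = return borel (T' a - a)"
definition "GY a l = 1 - exp (- (\<alpha> * (b + sin (c * a))) * l)"

lemma past_sets: assumes "E \<in> past_events Om Xp n" shows "E \<in> sets Om"
  and "\<exists>C. E = {\<omega>. (\<lambda>i\<in>{..n}. Xp i \<omega>) \<in> C}"
proof -
  obtain C where C: "C \<in> sets (Pi\<^sub>M {..n} (\<lambda>_. borel))" and E: "E = {\<omega> \<in> space Om. (\<lambda>i\<in>{..n}. Xp i \<omega>) \<in> C}"
    using assms unfolding past_events_def by blast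
  have f: "(\<lambda>\<omega>. \<lambda>i\<in>{..n}. Xp i \<omega>) \<in> measurable Om (Pi\<^sub>M {..n} (\<lambda>_. borel))"
    by (rule measurable_restrict) simp
  have "E = (\<lambda>\<omega>. \<lambda>i\<in>{..n}. Xp i \<omega>) -` C \<inter> space Om" using E by auto
  then show "E \<in> sets Om" using measurable_sets[OF f C] by simp
  show "\<exists>C. E = {\<omega>. (\<lambda>i\<in>{..n}. Xp i \<omega>) \<in> C}" using E by auto
qed

lemma past_dep: assumes "E \<in> past_events Om Xp (2 * k)" "\<forall>j<k. \<omega> j = \<omega>' j"
  shows "\<omega> \<in> E \<longleftrightarrow> \<omega>' \<in> E"
proof -
  obtain C where E: "E = {\<omega>. (\<lambda>i\<in>{..2*k}. Xp i \<omega>) \<in> C}" using past_sets(2)[OF assms(1)] by blast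
  have "(\<lambda>i\<in>{..2*k}. Xp i \<omega>) = (\<lambda>i\<in>{..2*k}. Xp i \<omega>')"
    using Xp_dep[OF _ assms(2)] by (intro restrict_ext) auto
  then show ?thesis using E by simp
qed

lemma even_cond: assumes n: "even n" and E: "E \<in> past_events Om Xp n" and l: "0 \<le> l"
  shows "emeasure Om ({\<omega>\<in>space Om. Xp (Suc n) \<omega> - Xp n \<omega> \<le> l} \<inter> E) =
         (\<integral>\<^sup>+\<omega>\<in>E. ennreal (GY (Xp n \<omega>) l) \<partial>Om)"
proof -
  obtain k where k: "n = 2 * k" using n by blast
  have Es: "E \<in> sets Om" by (rule past_sets(1)[OF E])
  have EsP: "E \<in> sets (Pi\<^sub>M UNIV (\<lambda>_. EXP))" using Es by (simp add: Om_def)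
  have kd: "n div 2 = k" using k by simp
  have set_eq: "{\<omega>\<in>space Om. Xp (Suc n) \<omega> - Xp n \<omega> \<le> l} = {\<omega>. \<omega> k \<le> lam (Xp n \<omega>) * l}"
  proof -
    have "Xp (Suc n) \<omega> - Xp n \<omega> \<le> l \<longleftrightarrow> Yf (Xp n \<omega>) (\<omega> k) \<le> Xp n \<omega> + l" for \<omega>
      using n kd by auto
    then show ?thesis using l by (auto simp: Yf_le_iff)
  qed
  define phi :: "(nat \<Rightarrow> real) \<times> real \<Rightarrow> ennreal" where "phi x = indicator E (fst x) * indicator {..lam (Xp n (fst x)) * l} (snd x)" for x
  have Xm: "(\<lambda>x. Xp n (fst x)) \<in> borel_measurable (Pi\<^sub>M UNIV (\<lambda>_. EXP) \<Otimes>\<^sub>M EXP)"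
    using Xp_meas[of n] unfolding Om_def by (intro measurable_compose[OF measurable_fst]) simp
  have sm: "snd \<in> borel_measurable (Pi\<^sub>M UNIV (\<lambda>_. EXP) \<Otimes>\<^sub>M EXP)"
    using measurable_snd[of "Pi\<^sub>M UNIV (\<lambda>_. EXP)" EXP] measurable_cong_sets[OF refl sets_EXP, of "Pi\<^sub>M UNIV (\<lambda>_. EXP) \<Otimes>\<^sub>M EXP"] by simp
  have meas: "phi \<in> borel_measurable (Pi\<^sub>M UNIV (\<lambda>_. EXP) \<Otimes>\<^sub>M EXP)"
  proof -
    have i1: "(\<lambda>x. indicator E (fst x) :: ennreal) \<in> borel_measurable (Pi\<^sub>M UNIV (\<lambda>_. EXP) \<Otimes>\<^sub>M EXP)"
      using EsP by (intro measurable_compose[OF measurable_fst]) auto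
    have "{x \<in> space (Pi\<^sub>M UNIV (\<lambda>_. EXP) \<Otimes>\<^sub>M EXP). snd x \<le> lam (Xp n (fst x)) * l} \<in> sets (Pi\<^sub>M UNIV (\<lambda>_. EXP) \<Otimes>\<^sub>M EXP)"
      using sm Xm by measurable
    then have i2: "(\<lambda>x. indicator {..lam (Xp n (fst x)) * l} (snd x) :: ennreal) \<in> borel_measurable (Pi\<^sub>M UNIV (\<lambda>_. EXP) \<Otimes>\<^sub>M EXP)"
      by (subst measurable_cong[where g="indicator {x \<in> space (Pi\<^sub>M UNIV (\<lambda>_. EXP) \<Otimes>\<^sub>M EXP). snd x \<le> lam (Xp n (fst x)) * l}"])
         (auto split: split_indicator)
    show ?thesis unfolding phi_def using i1 i2 by measurable
  qed
  have dep: "\<And>(\<omega>::nat\<Rightarrow>real) \<omega>' e. \<forall>j<k. \<omega> j = \<omega>' j \<Longrightarrow> phi (\<omega>, e) = phi (\<omega>', e)"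
  proof -
    fix \<omega> \<omega>' :: "nat \<Rightarrow> real" and e :: real assume a: "\<forall>j<k. \<omega> j = \<omega>' j"
    have "\<omega> \<in> E \<longleftrightarrow> \<omega>' \<in> E" using past_dep[of E k \<omega> \<omega>'] E a k by simp
    moreover have "Xp n \<omega> = Xp n \<omega>'" using Xp_dep[of n k \<omega> \<omega>'] a k by simp
    ultimately show "phi (\<omega>, e) = phi (\<omega>', e)" by (simp add: phi_def indicator_def)
  qed
  have "emeasure Om ({\<omega>\<in>space Om. Xp (Suc n) \<omega> - Xp n \<omega> \<le> l} \<inter> E) = (\<integral>\<^sup>+\<omega>. phi (\<omega>, \<omega> k) \<partial>Om)"
  proof -
    have "{\<omega>. \<omega> k \<le> lam (Xp n \<omega>) * l} \<inter> E \<in> sets Om"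
    proof -
      have ck[measurable]: "(\<lambda>\<omega>. \<omega> k) \<in> borel_measurable Om"
        using measurable_component_singleton[of k UNIV "\<lambda>_. EXP"] measurable_cong_sets[OF refl sets_EXP, of Om]
        unfolding Om_def by simp
      have "{\<omega> \<in> space Om. \<omega> k \<le> lam (Xp n \<omega>) * l} \<in> sets Om" by measurable
      then have "{\<omega>. \<omega> k \<le> lam (Xp n \<omega>) * l} \<in> sets Om" by simp
      then show ?thesis using Es by auto
    qed
    then have "emeasure Om ({\<omega>. \<omega> k \<le> lam (Xp n \<omega>) * l} \<inter> E) = (\<integral>\<^sup>+\<omega>. indicator ({\<omega>. \<omega> k \<le> lam (Xp n \<omega>) * l} \<inter> E) \<omega> \<partial>Om)"
      by (rule nn_integral_indicator[symmetric])
    also have "\<dots> = (\<integral>\<^sup>+\<omega>. phi (\<omega>, \<omega> k) \<partial>Om)"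
      by (intro nn_integral_cong) (auto simp: phi_def split: split_indicator)
    finally show ?thesis unfolding set_eq .
  qed
  also have "\<dots> = (\<integral>\<^sup>+\<omega>. \<integral>\<^sup>+e. phi (\<omega>, e) \<partial>EXP \<partial>Om)"
    using ind_split[OF EXP_prob meas dep] unfolding Om_def by simp
  also have "\<dots> = (\<integral>\<^sup>+\<omega>. ennreal (GY (Xp n \<omega>) l) * indicator E \<omega> \<partial>Om)"
  proof (rule nn_integral_cong)
    fix \<omega> :: "nat \<Rightarrow> real"
    have ll: "0 \<le> lam (Xp n \<omega>) * l" using l lam_pos[of "Xp n \<omega>"] by simp
    have "(\<integral>\<^sup>+e. phi (\<omega>, e) \<partial>EXP) = indicator E \<omega> * emeasure EXP {..lam (Xp n \<omega>) * l}"
      unfolding phi_def by (simp add: nn_integral_cmult)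
    also have "\<dots> = indicator E \<omega> * ennreal (GY (Xp n \<omega>) l)"
      using ll by (simp add: EXP_le GY_def lam_def algebra_simps)
    finally show "(\<integral>\<^sup>+e. phi (\<omega>, e) \<partial>EXP) = ennreal (GY (Xp n \<omega>) l) * indicator E \<omega>"
      by (simp add: mult.commute)
  qed
  finally show ?thesis .
qed

lemma odd_cond: assumes n: "odd n" and E: "E \<in> past_events Om Xp n" and B: "B \<in> sets borel"
  shows "emeasure Om ({\<omega>\<in>space Om. Xp (Suc n) \<omega> - Xp n \<omega> \<in> B} \<inter> E) =
         (\<integral>\<^sup>+\<omega>\<in>E. emeasure (GZ (Xp n \<omega>)) B \<partial>Om)"
proof -
  have Es: "E \<in> sets Om" by (rule past_sets(1)[OF E])
  have eq: "{\<omega>\<in>space Om. Xp (Suc n) \<omega> - Xp n \<omega> \<in> B} = {\<omega>\<in>space Om. T' (Xp n \<omega>) - Xp n \<omega> \<in> B}"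
    using n by simp
  have ms: "{\<omega>\<in>space Om. T' (Xp n \<omega>) - Xp n \<omega> \<in> B} \<in> sets Om" using B by measurable
  have "emeasure Om ({\<omega>\<in>space Om. Xp (Suc n) \<omega> - Xp n \<omega> \<in> B} \<inter> E) =
      (\<integral>\<^sup>+\<omega>. indicator ({\<omega>\<in>space Om. T' (Xp n \<omega>) - Xp n \<omega> \<in> B} \<inter> E) \<omega> \<partial>Om)"
    unfolding eq using ms Es by (subst nn_integral_indicator) auto
  also have "\<dots> = (\<integral>\<^sup>+\<omega>. emeasure (GZ (Xp n \<omega>)) B * indicator E \<omega> \<partial>Om)"
    using B by (intro nn_integral_cong) (simp add: GZ_def split: split_indicator)
  finally show ?thesis .
qed

lemma GZ_meas: "GZ \<in> borel \<rightarrow>\<^sub>M prob_algebra borel"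
proof -
  have "(\<lambda>a. T' a - a) \<in> borel_measurable borel" by measurable
  then show ?thesis unfolding GZ_def by (rule measurable_compose) (rule measurable_return_prob_space)
qed

lemma GZ_neg: "emeasure (GZ a) {..<0} = 0"
  using T'_ge[of a] by (simp add: GZ_def)

lemma is_alt: "alt_nhsm Om Xp (\<lambda>a l. 1 - exp (- (\<alpha> * (b + sin (c * a))) * l)) GZ"
  unfolding alt_nhsm_def
  using Om_prob Xp_meas Xp_mono GZ_meas GZ_neg even_cond[unfolded GY_def] odd_cond by auto

end


context rsetup begin

lemma EXP_sf: "sigma_finite_measure EXP" using EXP_prob by (rule prob_space_imp_sigma_finite)

lemma step_e_meas[measurable]: "(\<lambda>e. step s e) \<in> borel_measurable borel"
  using measurable_Pair2[OF step_meas, of s] by simp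

lemma P_ind: "B \<in> sets borel \<Longrightarrow> P (indicator B) s = emeasure EXP {e. step s e \<in> B}"
proof -
  assume B: "B \<in> sets borel"
  have "{e. step s e \<in> B} = (\<lambda>e. step s e) -` B \<inter> space EXP" by auto
  then have m: "{e. step s e \<in> B} \<in> sets EXP" using measurable_sets[OF step_e_meas B] by simp
  have "P (indicator B) s = (\<integral>\<^sup>+e. indicator {e. step s e \<in> B} e \<partial>EXP)"
    unfolding P_def by (intro nn_integral_cong) (simp split: split_indicator)
  then show ?thesis using m by simp
qed

definition "nu B = P (indicator B) 0 + (\<integral>\<^sup>+s. P (indicator B) s \<partial>rho)"
definition "Nu = measure_of UNIV (sets borel) nu"

lemma nu_ca: "countably_additive (sets borel) nu"
proof (rule countably_additiveI)
  fix A :: "nat \<Rightarrow> real set" assume A: "range A \<subseteq> sets borel" "disjoint_family A" "\<Union> (range A) \<in> sets borel"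
  have Am[measurable]: "A i \<in> sets borel" for i using A by auto
  have Pi: "P (indicator (\<Union>i. A i)) s = (\<Sum>i. P (indicator (A i)) s)" for s
  proof -
    have "P (indicator (\<Union>i. A i)) s = (\<integral>\<^sup>+e. (\<Sum>i. indicator (A i) (step s e)) \<partial>EXP)"
      unfolding P_def using suminf_indicator[OF A(2)] by simp
    also have "\<dots> = (\<Sum>i. P (indicator (A i)) s)"
      unfolding P_def by (rule nn_integral_suminf) simp
    finally show ?thesis .
  qed
  have "nu (\<Union>i. A i) = (\<Sum>i. P (indicator (A i)) 0) + (\<integral>\<^sup>+s. (\<Sum>i. P (indicator (A i)) s) \<partial>rho)"
    unfolding nu_def Pi ..
  also have "(\<integral>\<^sup>+s. (\<Sum>i. P (indicator (A i)) s) \<partial>rho) = (\<Sum>i. \<integral>\<^sup>+s. P (indicator (A i)) s \<partial>rho)"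
    by (rule nn_integral_suminf) simp
  also have "(\<Sum>i. P (indicator (A i)) 0) + (\<Sum>i. \<integral>\<^sup>+s. P (indicator (A i)) s \<partial>rho) = (\<Sum>i. nu (A i))"
    unfolding nu_def by (rule suminf_add) auto
  finally show "(\<Sum>i. nu (A i)) = nu (\<Union> (range A))" by simp
qed

lemma nu_pos: "positive (sets borel) nu"
  unfolding positive_def nu_def P_def by simp

lemma emeasure_Nu: "B \<in> sets borel \<Longrightarrow> emeasure Nu B = nu B"
  unfolding Nu_def by (rule emeasure_measure_of_sigma[OF _ nu_pos nu_ca]) (use sets.sigma_algebra_axioms[of borel] in auto)

lemma sets_Nu: "sets Nu = sets borel"
  unfolding Nu_def by (subst sets_measure_of) (auto simp: sets.sigma_sets_eq[of borel, simplified])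

lemma nu_atMost: "nu {..t} = emeasure rho {..t}"
proof (cases "t < 0")
  case True
  have Pz: "P (indicator {..t}) s = 0" for s
  proof -
    have "step s e > t" for e using T'_nonneg[of "Yf s e"] True by (simp add: step_def)
    then have "indicator {..t} (step s e) = (0::ennreal)" for e by (metis atMost_iff indicator_simps(2) not_le)
    then show ?thesis unfolding P_def by simp
  qed
  have "emeasure rho {..t} = 0" using rho_fin[of t] Mf_le_0[of t] True by simp
  then show ?thesis by (simp add: nu_def Pz)
next
  case False
  then have t: "0 \<le> t" by simp
  obtain u where u: "0 \<le> u" "F u = Mf t" using F_inv[OF Mf_nonneg[of t]] by blast
  have Pg: "P (indicator {..t}) s = ennreal (g0 s u)" if s: "0 \<le> s" for s
  proof -
    have "{e. step s e \<in> {..t}} = {e. Yf s e \<le> u}"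
    proof -
      have "step s e \<le> t \<longleftrightarrow> Yf s e \<le> u" for e
      proof -
        have y: "0 \<le> Yf s e" using Yf_ge[of s e] s by linarith
        have "step s e \<le> t \<longleftrightarrow> F (Yf s e) \<le> F u" using step_le_iff[OF s] t u by simp
        also have "\<dots> \<longleftrightarrow> Yf s e \<le> u" by (rule F_le_iff[OF y u(1)])
        finally show ?thesis .
      qed
      then show ?thesis by auto
    qed
    then show ?thesis by (simp add: P_ind G_eq)
  qed
  have "(\<integral>\<^sup>+s. P (indicator {..t}) s \<partial>rho) = (\<integral>\<^sup>+s. ennreal (m s) * P (indicator {..t}) s \<partial>lborel)"
    by (rule nn_integral_rho) simp
  also have "\<dots> = (\<integral>\<^sup>+s. ennreal (m s) * ennreal (g0 s u) \<partial>lborel)"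
  proof (rule nn_integral_cong)
    fix s :: real
    show "ennreal (m s) * P (indicator {..t}) s = ennreal (m s) * ennreal (g0 s u)"
      by (cases "s < 0") (auto simp: m_neg Pg)
  qed
  finally have "nu {..t} = Fe u" unfolding nu_def Fe_def using Pg[of 0] by simp
  then show ?thesis using Fe_fin[of u] u rho_fin[of t] by simp
qed

lemma Nu_rho: "Nu = rho"
proof (rule measure_eqI_generator_eq[where E="range atMost" and \<Omega>=UNIV and A="\<lambda>i. {..real i}"])
  show "Int_stable (range atMost :: real set set)" by (auto simp: Int_stable_def)
  show "range atMost \<subseteq> Pow (UNIV :: real set)" by auto
  show "\<And>X. X \<in> range atMost \<Longrightarrow> emeasure Nu X = emeasure rho X"
    by (auto simp: emeasure_Nu nu_atMost)
  show "sets Nu = sigma_sets UNIV (range atMost)"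
    unfolding sets_Nu by (subst borel_eq_atMost) (simp add: sets_measure_of)
  show "sets rho = sigma_sets UNIV (range atMost)"
    unfolding sets_rho by (subst borel_eq_atMost) (simp add: sets_measure_of)
  show "range (\<lambda>i. {..real i}) \<subseteq> range atMost" by auto
  show "(\<Union>i. {..real i}) = UNIV" by (auto intro: real_arch_simple)
  show "\<And>i. emeasure Nu {..real i} \<noteq> \<infinity>" by (simp add: emeasure_Nu nu_atMost rho_fin)
qed

lemma fp_set: "B \<in> sets borel \<Longrightarrow> emeasure rho B = P (indicator B) 0 + (\<integral>\<^sup>+s. P (indicator B) s \<partial>rho)"
  using emeasure_Nu[of B] unfolding Nu_rho nu_def by simp

end


context rsetup begin

lemma P_cmult: fixes u :: "real \<Rightarrow> ennreal" and k :: ennreal shows "u \<in> borel_measurable borel \<Longrightarrow> P (\<lambda>x. k * u x) s = k * P u s"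
  unfolding P_def by (rule nn_integral_cmult) simp

lemma P_add: fixes u v :: "real \<Rightarrow> ennreal" shows "u \<in> borel_measurable borel \<Longrightarrow> v \<in> borel_measurable borel \<Longrightarrow> P (\<lambda>x. v x + u x) s = P v s + P u s"
  unfolding P_def by (rule nn_integral_add) auto

lemma P_mono: fixes u v :: "real \<Rightarrow> ennreal" shows "(\<And>x. u x \<le> v x) \<Longrightarrow> P u s \<le> P v s"
  unfolding P_def by (intro nn_integral_mono) auto

lemma P_SUP: fixes U :: "nat \<Rightarrow> real \<Rightarrow> ennreal" assumes U: "\<And>i. U i \<in> borel_measurable borel" "incseq U"
  shows "P (SUP i. U i) s = (SUP i. P (U i) s)"
proof -
  have "P (SUP i. U i) s = (\<integral>\<^sup>+e. (SUP i. (\<lambda>i e. U i (step s e)) i e) \<partial>EXP)"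
    unfolding P_def by (simp add: SUP_apply image_comp)
  also have "\<dots> = (SUP i. \<integral>\<^sup>+e. U i (step s e) \<partial>EXP)"
  proof (rule nn_integral_monotone_convergence_SUP)
    show "incseq (\<lambda>i e. U i (step s e))" using U(2) by (auto simp: incseq_def le_fun_def)
  qed (use U(1) in simp)
  finally show ?thesis by (simp add: P_def)
qed

lemma fp: assumes g: "g \<in> borel_measurable borel"
  shows "(\<integral>\<^sup>+s. g s \<partial>rho) = P g 0 + (\<integral>\<^sup>+s. P g s \<partial>rho)"
  using g
proof (induction rule: borel_measurable_induct)
  case (cong f g)
  then have "f = g" by (auto simp: fun_eq_iff)
  with cong show ?case by simp
next
  case (set A)
  then have "(\<integral>\<^sup>+s. indicator A s \<partial>rho) = emeasure rho A" by (intro nn_integral_indicator) simp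
  then show ?case using fp_set[OF set] by simp
next
  case (mult u k)
  note um[measurable] = mult(2)
  have "(\<integral>\<^sup>+s. k * u s \<partial>rho) = k * (\<integral>\<^sup>+s. u s \<partial>rho)" by (rule nn_integral_cmult) simp
  also have "\<dots> = k * P u 0 + k * (\<integral>\<^sup>+s. P u s \<partial>rho)" using mult(4) by (simp add: distrib_left)
  also have "k * (\<integral>\<^sup>+s. P u s \<partial>rho) = (\<integral>\<^sup>+s. P (\<lambda>x. k * u x) s \<partial>rho)"
  proof -
    have e: "P (\<lambda>x. k * u x) = (\<lambda>s. k * P u s)" using P_cmult[OF um, of k] by (simp add: fun_eq_iff)
    show ?thesis unfolding e by (rule nn_integral_cmult[symmetric]) simp
  qed
  finally show ?case by (simp add: P_cmult)
next
  case (add u v)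
  note [measurable] = add(1) add(5)
  have "(\<integral>\<^sup>+s. v s + u s \<partial>rho) = (\<integral>\<^sup>+s. v s \<partial>rho) + (\<integral>\<^sup>+s. u s \<partial>rho)" using add by (intro nn_integral_add) (auto simp: measurable_cong_sets[OF sets_rho refl])
  also have "\<dots> = (P v 0 + (\<integral>\<^sup>+s. P v s \<partial>rho)) + (P u 0 + (\<integral>\<^sup>+s. P u s \<partial>rho))" using add by simp
  also have "\<dots> = (P v 0 + P u 0) + ((\<integral>\<^sup>+s. P v s \<partial>rho) + (\<integral>\<^sup>+s. P u s \<partial>rho))" by (simp add: ac_simps)
  also have "(\<integral>\<^sup>+s. P v s \<partial>rho) + (\<integral>\<^sup>+s. P u s \<partial>rho) = (\<integral>\<^sup>+s. P v s + P u s \<partial>rho)"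
    using add by (intro nn_integral_add[symmetric]) (auto simp: measurable_cong_sets[OF sets_rho refl] intro: P_meas)
  moreover have "P (\<lambda>x. v x + u x) = (\<lambda>s. P v s + P u s)"
    using add P_add[of u v] by (simp add: fun_eq_iff)
  ultimately show ?case by simp
next
  case (seq U)
  have Um[measurable]: "\<And>i. U i \<in> borel_measurable borel" using seq by blast
  have incU: "incseq U" using seq by blast
  have IH: "\<And>i. (\<integral>\<^sup>+s. U i s \<partial>rho) = P (U i) 0 + (\<integral>\<^sup>+s. P (U i) s \<partial>rho)" using seq by blast
  have incP: "incseq (\<lambda>i. P (U i))" using incU by (auto simp: incseq_def le_fun_def intro!: P_mono)
  have inc0: "incseq (\<lambda>i. P (U i) 0)" using incP by (auto simp: incseq_def le_fun_def)
  have incI: "incseq (\<lambda>i. \<integral>\<^sup>+s. P (U i) s \<partial>rho)" using incP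
    by (auto simp: incseq_def le_fun_def intro!: nn_integral_mono)
  have "(\<integral>\<^sup>+s. (SUP i. U i) s \<partial>rho) = (\<integral>\<^sup>+s. (SUP i. U i s) \<partial>rho)" by (simp add: SUP_apply image_comp)
  also have "\<dots> = (SUP i. \<integral>\<^sup>+s. U i s \<partial>rho)"
    by (rule nn_integral_monotone_convergence_SUP) (use incU in \<open>auto simp: incseq_def le_fun_def\<close>)
  also have "\<dots> = (SUP i. P (U i) 0 + (\<integral>\<^sup>+s. P (U i) s \<partial>rho))" using IH by simp
  also have "\<dots> = (SUP i. P (U i) 0) + (SUP i. \<integral>\<^sup>+s. P (U i) s \<partial>rho)"
    by (rule ennreal_SUP_add[OF inc0 incI])
  also have "(SUP i. P (U i) 0) = P (SUP i. U i) 0" using P_SUP[OF Um incU] by simp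
  also have "(SUP i. \<integral>\<^sup>+s. P (U i) s \<partial>rho) = (\<integral>\<^sup>+s. (SUP i. P (U i) s) \<partial>rho)"
    by (rule nn_integral_monotone_convergence_SUP[symmetric]) (use incP in \<open>auto simp: incseq_def le_fun_def\<close>)
  also have "\<dots> = (\<integral>\<^sup>+s. P (SUP i. U i) s \<partial>rho)" using P_SUP[OF Um incU] by simp
  finally show ?case .
qed

lemma iter: assumes g[measurable]: "g \<in> borel_measurable borel"
  shows "(\<integral>\<^sup>+s. g s \<partial>rho) = (\<Sum>n<N. (P ^^ Suc n) g 0) + (\<integral>\<^sup>+s. (P ^^ N) g s \<partial>rho)"
proof (induction N)
  case 0 then show ?case by simp
next
  case (Suc N)
  have "(\<integral>\<^sup>+s. (P ^^ N) g s \<partial>rho) = P ((P ^^ N) g) 0 + (\<integral>\<^sup>+s. P ((P ^^ N) g) s \<partial>rho)"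
    by (rule fp) simp
  then show ?case using Suc by (simp add: ac_simps)
qed

end


context rsetup begin

definition "qq = 1 - exp (- 1) + exp (- 2::real)"

lemma qq_bounds: "0 \<le> qq" "qq < 1"
proof -
  have "exp (- 2) < exp (- 1::real)" by simp
  moreover have "exp (- 1) \<le> (1::real)" by simp
  moreover have "0 < exp (- 2::real)" by simp
  ultimately show "0 \<le> qq" "qq < 1" unfolding qq_def by linarith+
qed

lemma EXP_q: "(\<integral>\<^sup>+e. ennreal (exp (- max 0 e)) \<partial>EXP) \<le> ennreal qq"
proof -
  interpret EXP: prob_space EXP by (rule EXP_prob)
  have c: "emeasure EXP {1<..} = ennreal (exp (- 1))"
  proof -
    have "{1<..} = space EXP - {..1::real}" by auto
    then have "emeasure EXP {1<..} = emeasure EXP (space EXP) - emeasure EXP {..1}"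
      by (simp add: emeasure_compl EXP_le del: space_EXP)
    also have "\<dots> = ennreal 1 - ennreal (1 - exp (- 1))"
    proof -
      have "emeasure EXP (space EXP) = 1" by (rule EXP.emeasure_space_1)
      then show ?thesis by (simp add: EXP_le)
    qed
    also have "\<dots> = ennreal (exp (- 1))" by (subst ennreal_minus) auto
    finally show ?thesis .
  qed
  have "(\<integral>\<^sup>+e. ennreal (exp (- max 0 e)) \<partial>EXP) \<le> (\<integral>\<^sup>+e. indicator {..1} e + ennreal (exp (- 1)) * indicator {1<..} e \<partial>EXP)"
  proof (rule nn_integral_mono)
    fix e :: real
    show "ennreal (exp (- max 0 e)) \<le> indicator {..1} e + ennreal (exp (- 1)) * indicator {1<..} e"
      by (cases "e \<le> 1") (auto intro!: ennreal_leI simp: max_def)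
  qed
  also have "\<dots> = emeasure EXP {..1} + ennreal (exp (- 1)) * emeasure EXP {1<..}"
    by (subst nn_integral_add) (auto simp: nn_integral_cmult)
  also have "\<dots> = ennreal qq"
    by (simp add: c EXP_le qq_def ennreal_mult[symmetric] exp_add[symmetric] ennreal_plus[symmetric] del: ennreal_plus)
  finally show ?thesis .
qed

lemma Pn_bound: "(P ^^ N) (indicator {..t}) s \<le> ennreal (exp (Lmax * (t - s)) * qq ^ N)"
proof (induction N arbitrary: s)
  case 0
  show ?case
  proof (cases "s \<le> t")
    case True
    have "1 \<le> exp (Lmax * (t - s))" using True Lmin_le_Lmax Lmin_pos by simp
    then show ?thesis using True by (simp add: ennreal_leI)
  qed simp
next
  case (Suc N)
  have "(P ^^ Suc N) (indicator {..t}) s = (\<integral>\<^sup>+e. (P ^^ N) (indicator {..t}) (step s e) \<partial>EXP)"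
    by (simp add: P_def)
  also have "\<dots> \<le> (\<integral>\<^sup>+e. ennreal (exp (Lmax * (t - s)) * qq ^ N) * ennreal (exp (- max 0 e)) \<partial>EXP)"
  proof (rule nn_integral_mono)
    fix e
    have l: "0 < lam s" "lam s \<le> Lmax" using lam_pos lam_le by auto
    have "max 0 e \<le> Lmax * (max 0 e / lam s)"
    proof -
      have "max 0 e = lam s * (max 0 e / lam s)" using l by simp
      also have "\<dots> \<le> Lmax * (max 0 e / lam s)" using l by (intro mult_right_mono) auto
      finally show ?thesis .
    qed
    moreover have "s + max 0 e / lam s \<le> step s e" using T'_ge[of "Yf s e"] by (simp add: step_def Yf_def)
    ultimately have "Lmax * (t - step s e) \<le> Lmax * (t - s) + - max 0 e"
      using Lmin_le_Lmax Lmin_pos by (smt (verit, best) mult_left_mono right_diff_distrib)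
    then have "exp (Lmax * (t - step s e)) \<le> exp (Lmax * (t - s)) * exp (- max 0 e)"
      by (simp add: exp_add[symmetric])
    then have "exp (Lmax * (t - step s e)) * qq ^ N \<le> exp (Lmax * (t - s)) * exp (- max 0 e) * qq ^ N"
      using qq_bounds by (intro mult_right_mono) auto
    then have "exp (Lmax * (t - step s e)) * qq ^ N \<le> exp (Lmax * (t - s)) * qq ^ N * exp (- max 0 e)"
      by (simp add: ac_simps)
    then have "ennreal (exp (Lmax * (t - step s e)) * qq ^ N) \<le> ennreal (exp (Lmax * (t - s)) * qq ^ N) * ennreal (exp (- max 0 e))"
      using qq_bounds by (simp add: ennreal_mult[symmetric] ennreal_leI del: ennreal_mult)
    then show "(P ^^ N) (indicator {..t}) (step s e) \<le> ennreal (exp (Lmax * (t - s)) * qq ^ N) * ennreal (exp (- max 0 e))"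
      using Suc.IH[of "step s e"] by (rule order_trans[rotated])
  qed
  also have "\<dots> = ennreal (exp (Lmax * (t - s)) * qq ^ N) * (\<integral>\<^sup>+e. ennreal (exp (- max 0 e)) \<partial>EXP)"
    by (rule nn_integral_cmult) simp
  also have "\<dots> \<le> ennreal (exp (Lmax * (t - s)) * qq ^ N) * ennreal qq"
    by (intro mult_left_mono EXP_q) simp
  also have "\<dots> = ennreal (exp (Lmax * (t - s)) * qq ^ Suc N)"
    using qq_bounds by (simp add: ennreal_mult[symmetric] del: ennreal_mult)
  finally show ?case .
qed

definition "CC t = Lmin * exp (Lmax * t) / Lmax"

lemma rho_exp: "(\<integral>\<^sup>+s. ennreal (exp (Lmax * (t - s))) \<partial>rho) \<le> ennreal (CC t)"
proof -
  have Lp: "0 < Lmax" using Lmin_le_Lmax Lmin_pos by simp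
  have "(\<integral>\<^sup>+s. ennreal (exp (Lmax * (t - s))) \<partial>rho) = (\<integral>\<^sup>+s. ennreal (m s) * ennreal (exp (Lmax * (t - s))) \<partial>lborel)"
    by (rule nn_integral_rho) simp
  also have "\<dots> \<le> (\<integral>\<^sup>+s. ennreal (CC t) * ennreal (exponential_density Lmax s) \<partial>lborel)"
  proof (rule nn_integral_mono)
    fix s :: real
    show "ennreal (m s) * ennreal (exp (Lmax * (t - s))) \<le> ennreal (CC t) * ennreal (exponential_density Lmax s)"
    proof (cases "s < 0")
      case True then show ?thesis by (simp add: m_neg)
    next
      case False
      have "m s * exp (Lmax * (t - s)) \<le> Lmin * exp (Lmax * (t - s))"
        using m_le[of s] by (intro mult_right_mono) auto
      also have "\<dots> = CC t * (Lmax * exp (- s * Lmax))"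
        using Lp by (simp add: CC_def exp_add[symmetric] algebra_simps)
      finally have "ennreal (m s * exp (Lmax * (t - s))) \<le> ennreal (CC t * exponential_density Lmax s)"
        using False by (intro ennreal_leI) (simp add: exponential_density_def)
      moreover have "ennreal (CC t * exponential_density Lmax s) = ennreal (CC t) * ennreal (exponential_density Lmax s)"
        using Lp Lmin_pos by (intro ennreal_mult) (auto simp: CC_def exponential_density_def)
      moreover have "ennreal (m s * exp (Lmax * (t - s))) = ennreal (m s) * ennreal (exp (Lmax * (t - s)))"
        using m_nonneg[of s] by (intro ennreal_mult) auto
      ultimately show ?thesis by simp
    qed
  qed
  also have "\<dots> = ennreal (CC t) * (\<integral>\<^sup>+s. ennreal (exponential_density Lmax s) \<partial>lborel)"
    by (rule nn_integral_cmult) simp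
  also have "(\<integral>\<^sup>+s. ennreal (exponential_density Lmax s) \<partial>lborel) = 1"
  proof -
    interpret E: prob_space "density lborel (exponential_density Lmax)"
      using Lp by (rule prob_space_exponential_density)
    have "emeasure (density lborel (exponential_density Lmax)) UNIV = 1"
      using E.emeasure_space_1 by simp
    then show ?thesis by (simp add: emeasure_density)
  qed
  finally show ?thesis by simp
qed

end


context rsetup begin

lemma renewal: assumes t: "0 \<le> t"
  shows "renewal_function Om Xp t = (\<integral>\<^sup>+s\<in>{0..t}. ennreal (\<Sum>j=1..J. \<delta> j * indicator (A j) s) \<partial>lborel)"
proof -
  define a where "a n = (P ^^ Suc n) (indicator {..t}) 0" for n
  have hterm: "emeasure Om {\<omega> \<in> space Om. Xp (2 * Suc n) \<omega> \<le> t} = a n" for n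
  proof -
    have ms: "{\<omega> \<in> space Om. Xp (2 * Suc n) \<omega> \<le> t} \<in> sets Om" by measurable
    have "emeasure Om {\<omega> \<in> space Om. Xp (2 * Suc n) \<omega> \<le> t} = (\<integral>\<^sup>+\<omega>. indicator {\<omega> \<in> space Om. Xp (2 * Suc n) \<omega> \<le> t} \<omega> \<partial>Om)"
      using ms by simp
    also have "\<dots> = (\<integral>\<^sup>+\<omega>. indicator {..t} (Xp (2 * Suc n) \<omega>) \<partial>Om)"
      by (intro nn_integral_cong) (simp split: split_indicator)
    also have "\<dots> = a n" unfolding a_def by (rule markov) simp
    finally show ?thesis .
  qed
  have lhs: "renewal_function Om Xp t = suminf a"
    unfolding renewal_function_def hterm ..
  have rhs: "(\<integral>\<^sup>+s\<in>{0..t}. ennreal (\<Sum>j=1..J. \<delta> j * indicator (A j) s) \<partial>lborel) = emeasure rho {..t}"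
    unfolding emeasure_rho[OF atMost_borel] m_def[symmetric]
    by (intro nn_integral_cong) (auto simp: m_neg split: split_indicator)
  have it: "emeasure rho {..t} = (\<Sum>n<N. a n) + (\<integral>\<^sup>+s. (P ^^ N) (indicator {..t}) s \<partial>rho)" for N
  proof -
    have "emeasure rho {..t} = (\<integral>\<^sup>+s. indicator {..t} s \<partial>rho)" by simp
    also have "\<dots> = (\<Sum>n<N. a n) + (\<integral>\<^sup>+s. (P ^^ N) (indicator {..t}) s \<partial>rho)"
      unfolding a_def by (rule iter) simp
    finally show ?thesis .
  qed
  have R: "(\<integral>\<^sup>+s. (P ^^ N) (indicator {..t}) s \<partial>rho) \<le> ennreal (CC t * qq ^ N)" for N
  proof -
    have "(\<integral>\<^sup>+s. (P ^^ N) (indicator {..t}) s \<partial>rho) \<le> (\<integral>\<^sup>+s. ennreal (qq ^ N) * ennreal (exp (Lmax * (t - s))) \<partial>rho)"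
    proof (rule nn_integral_mono)
      fix s
      have "(P ^^ N) (indicator {..t}) s \<le> ennreal (exp (Lmax * (t - s)) * qq ^ N)" by (rule Pn_bound)
      also have "\<dots> = ennreal (qq ^ N) * ennreal (exp (Lmax * (t - s)))"
        using qq_bounds by (subst ennreal_mult[symmetric]) (auto simp: mult.commute)
      finally show "(P ^^ N) (indicator {..t}) s \<le> ennreal (qq ^ N) * ennreal (exp (Lmax * (t - s)))" .
    qed
    also have "\<dots> = ennreal (qq ^ N) * (\<integral>\<^sup>+s. ennreal (exp (Lmax * (t - s))) \<partial>rho)"
      by (rule nn_integral_cmult) simp
    also have "\<dots> \<le> ennreal (qq ^ N) * ennreal (CC t)" by (intro mult_left_mono rho_exp) simp
    also have "\<dots> = ennreal (CC t * qq ^ N)"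
      using qq_bounds Lmin_pos Lmin_le_Lmax by (subst ennreal_mult[symmetric]) (auto simp: CC_def mult.commute)
    finally show ?thesis .
  qed
  have le1: "suminf a \<le> emeasure rho {..t}"
  proof (rule suminf_le_const)
    fix N show "sum a {..<N} \<le> emeasure rho {..t}" unfolding it[of N] by simp
  qed simp
  have le2: "emeasure rho {..t} \<le> suminf a"
  proof (rule LIMSEQ_le_const)
    have "(\<lambda>N. CC t * qq ^ N) \<longlonglongrightarrow> CC t * 0"
      using qq_bounds by (intro tendsto_mult tendsto_const LIMSEQ_power_zero) simp
    then have "(\<lambda>N. ennreal (CC t * qq ^ N)) \<longlonglongrightarrow> ennreal 0" by (intro tendsto_ennrealI) simp
    then show "(\<lambda>N. suminf a + ennreal (CC t * qq ^ N)) \<longlonglongrightarrow> suminf a"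
      using tendsto_add[OF tendsto_const[of "suminf a"]] by fastforce
    show "\<exists>N0. \<forall>N\<ge>N0. emeasure rho {..t} \<le> suminf a + ennreal (CC t * qq ^ N)"
    proof (intro exI allI impI)
      fix N
      have "sum a {..<N} \<le> suminf a" by (rule sum_le_suminf) auto
      then show "emeasure rho {..t} \<le> suminf a + ennreal (CC t * qq ^ N)"
        unfolding it[of N] by (intro add_mono R)
    qed
  qed
  show ?thesis unfolding lhs rhs using le1 le2 by simp
qed

end

theorem corollary3:
  fixes \<alpha> b c :: real and J :: nat and A :: "nat \<Rightarrow> real set" and \<delta> :: "nat \<Rightarrow> real"
  assumes "\<alpha> > 0" and "b \<ge> 1"
    and "\<forall>j\<in>{1..J}. A j \<in> sets borel"
    and "disjoint_family_on A {1..J}"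
    and "(\<Union>j\<in>{1..J}. A j) = {0..}"
    and "\<forall>j\<in>{1..J}. \<delta> j > 0"
    and "\<forall>j\<in>{1..J}. \<delta> j \<le> \<alpha> * (b - 1)"
  shows "\<exists>(M :: (nat \<Rightarrow> real) measure) X GZ.
           alt_nhsm M X (\<lambda>a l. 1 - exp (- (\<alpha> * (b + sin (c * a))) * l)) GZ \<and>
           (\<forall>t\<ge>0. renewal_function M X t =
              (\<integral>\<^sup>+s\<in>{0..t}. ennreal (\<Sum>j=1..J. \<delta> j * indicator (A j) s) \<partial>lborel))"
proof -
  interpret R: rsetup \<alpha> b c J A \<delta> using assms by unfold_locales
  show ?thesis using R.is_alt R.renewal by blast
qed


end
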